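(* Assume CH. Let $\mathcal{I}$ be a $\sigma$-ideal on $\mathbb{R}$ satisfying the standing assumptions. Then there exists an $\mathcal{I}$-Luzin set $L\subseteq\mathbb{R}$ such that its $\mathbb{Q}$-linear span $\mathrm{span}_{\mathbb{Q}}(L)$ is also an $\mathcal{I}$-Luzin set.
   Context: Standing assumptions on $\mathcal{I}$: $\mathcal{I}$ is a $\sigma$-ideal of subsets of $\mathbb{R}$ such that $\mathbb{R}\notin\mathcal{I}$; $x+I\in\mathcal{I}$ and $xI\in\mathcal{I}$ for all $x\in\mathbb{R}$, $I\in\mathcal{I}$; every member of $\mathcal{I}$ is contained in a Borel member of $\mathcal{I}$; and for all Borel $A,B\notin\mathcal{I}$ the set $A-B$ has nonempty interior. A set $L\subseteq\mathbb{R}$ is $\mathcal{I}$-Luzin if $|L|=\mathfrak{c}$ and $L\cap I$ is countable for every $I\in\mathcal{I}$. *)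

theory Defs
  imports "HOL-Analysis.Analysis" "HOL-Library.Equipollence"
begin

definition CH :: bool where
  "CH \<longleftrightarrow> (\<forall>A :: real set. uncountable A \<longrightarrow> A \<approx> (UNIV :: real set))"

definition sigma_ideal :: "real set set \<Rightarrow> bool" where
  "sigma_ideal \<I> \<longleftrightarrow>
     {} \<in> \<I> \<and>
     (\<forall>A B. A \<in> \<I> \<longrightarrow> B \<subseteq> A \<longrightarrow> B \<in> \<I>) \<and>
     (\<forall>f :: nat \<Rightarrow> real set. range f \<subseteq> \<I> \<longrightarrow> \<Union>(range f) \<in> \<I>)"

definition standing_ideal :: "real set set \<Rightarrow> bool" where
  "standing_ideal \<I> \<longleftrightarrow>
     sigma_ideal \<I> \<and>
     (UNIV :: real set) \<notin> \<I> \<and>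
     (\<forall>x. \<forall>I\<in>\<I>. (\<lambda>y. x + y) ` I \<in> \<I> \<and> (\<lambda>y. x * y) ` I \<in> \<I>) \<and>
     (\<forall>I\<in>\<I>. \<exists>B\<in>\<I>. B \<in> sets borel \<and> I \<subseteq> B) \<and>
     (\<forall>A B. A \<in> sets borel \<longrightarrow> B \<in> sets borel \<longrightarrow> A \<notin> \<I> \<longrightarrow> B \<notin> \<I> \<longrightarrow>
        interior {a - b | a b. a \<in> A \<and> b \<in> B} \<noteq> {})"

definition ideal_Luzin :: "real set set \<Rightarrow> real set \<Rightarrow> bool" where
  "ideal_Luzin \<I> L \<longleftrightarrow> L \<approx> (UNIV :: real set) \<and> (\<forall>I\<in>\<I>. countable (L \<inter> I))"

definition rat_span :: "real set \<Rightarrow> real set" where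
  "rat_span L = {\<Sum>x\<in>F. of_rat (c x) * x | F c. finite F \<and> F \<subseteq> L}"

end

theory Submission
  imports Defs
begin


datatype bcode = Bs nat | Cp bcode | Uc "nat \<Rightarrow> bcode"

primrec enc :: "bcode \<Rightarrow> (nat list \<times> nat) set" where
  "enc (Bs n) = {([], n+3)}"
| "enc (Cp c) = insert ([],1) ((\<lambda>(p,k). (0#p,k)) ` enc c)"
| "enc (Uc f) = insert ([],2) (\<Union>i. (\<lambda>(p,k). (i#p,k)) ` enc (f i))"

definition sub :: "nat \<Rightarrow> (nat list \<times> nat) set \<Rightarrow> (nat list \<times> nat) set" where
  "sub i X = {(p,k). (i#p,k) \<in> X}"

lemma sub_Cp: "sub 0 (enc (Cp c)) = enc c" by (auto simp: sub_def)
lemma sub_Un: "sub i (enc (Uc f)) = enc (f i)" by (auto simp: sub_def)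

definition rt :: "(nat list \<times> nat) set \<Rightarrow> nat set" where
  "rt X = {k. ([],k) \<in> X}"

lemma rt_Bs: "rt (enc (Bs n)) = {n+3}" by (auto simp: rt_def)
lemma rt_Cp: "rt (enc (Cp c)) = {1}" by (auto simp: rt_def)
lemma rt_Uc: "rt (enc (Uc f)) = {2}" by (auto simp: rt_def)

lemma inj_enc: "inj enc"
proof -
  have "enc c = enc d \<Longrightarrow> c = d" for c d
  proof (induction c arbitrary: d)
    case (Bs n)
    then have "rt (enc d) = {n+3}" using rt_Bs by metis
    then show ?case by (cases d) (simp_all add: rt_Cp rt_Uc rt_Bs del: enc.simps)
  next
    case (Cp c)
    then have r: "rt (enc d) = {1}" using rt_Cp by metis
    show ?case
    proof (cases d)
      case (Cp c')
      then have "enc c = enc c'" using Cp.prems sub_Cp by metis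
      then show ?thesis using Cp Cp.IH by simp
    qed (use r in \<open>simp_all add: rt_Cp rt_Uc rt_Bs del: enc.simps\<close>)
  next
    case (Uc f)
    then have r: "rt (enc d) = {2}" using rt_Uc by metis
    show ?case
    proof (cases d)
      case (Uc g)
      have "f i = g i" for i
      proof -
        have "enc (f i) = enc (g i)" using Uc.prems Uc sub_Un by metis
        then show ?thesis using Uc.IH[of "f i" "g i"] by simp
      qed
      then show ?thesis using Uc by auto
    qed (use r in \<open>simp_all add: rt_Cp rt_Uc rt_Bs del: enc.simps\<close>)
  qed
  then show ?thesis by (auto intro: injI)
qed

primrec ev :: "real set set \<Rightarrow> bcode \<Rightarrow> real set" where
  "ev B (Bs n) = from_nat_into B n"
| "ev B (Cp c) = - ev B c"
| "ev B (Uc f) = (\<Union>i. ev B (f i))"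

lemma ev_rng: "ev B c = a \<Longrightarrow> a \<in> range (ev B)"
  by (drule sym) simp

lemma borel_range_ev: "\<exists>B. sets borel \<subseteq> range (ev B)"
proof -
  obtain B :: "real set set" where B: "countable B" "topological_basis B"
    using ex_countable_basis by blast
  have "sets borel = sets (sigma UNIV B)"
    using borel_eq_countable_basis[OF B] by simp
  also have "\<dots> = sigma_sets UNIV B" by (rule sets_measure_of) auto
  finally have sb: "sets borel = sigma_sets UNIV B" .
  have "sigma_sets UNIV B \<subseteq> range (ev B)"
  proof
    fix X assume "X \<in> sigma_sets UNIV B"
    then show "X \<in> range (ev B)"
    proof induction
      case (Basic a)
      then have "ev B (Bs (to_nat_on B a)) = a" using B(1) by (simp add: from_nat_into_to_nat_on)
      then show ?case by (rule ev_rng)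
    next
      case Empty
      define f where "f = (\<lambda>n::nat. if n = 0 then Bs 0 else Cp (Bs 0))"
      have "x \<in> (\<Union>i. ev B (f i))" for x
      proof (cases "x \<in> ev B (Bs 0)")
        case True then show ?thesis by (intro UN_I[of 0]) (simp_all add: f_def)
      next
        case False then show ?thesis by (intro UN_I[of 1]) (simp_all add: f_def)
      qed
      then have "ev B (Cp (Uc f)) = {}" by auto
      then show ?case by (rule ev_rng)
    next
      case (Compl a)
      then obtain c where "a = ev B c" by auto
      then have "ev B (Cp c) = UNIV - a" by auto
      then show ?case by (rule ev_rng)
    next
      case (Union a)
      then have "\<forall>i. \<exists>c. a i = ev B c" by (metis image_iff)
      then obtain k where "\<And>i. a i = ev B (k i)" by metis
      then have "ev B (Uc k) = \<Union>(range a)" by auto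
      then show ?case by (rule ev_rng)
    qed
  qed
  then show ?thesis using sb by auto
qed

lemma borel_surj: "\<exists>g :: real \<Rightarrow> real set. sets borel \<subseteq> range g"
proof -
  obtain B where B: "sets borel \<subseteq> range (ev B)" using borel_range_ev by blast
  obtain \<phi> :: "nat set \<Rightarrow> real" where phi: "bij_betw \<phi> UNIV UNIV"
    using nat_sets_eqpoll_reals unfolding eqpoll_def by blast
  define \<psi> where "\<psi> c = \<phi> (to_nat ` enc c)" for c
  have "inj \<psi>"
  proof (rule injI)
    fix c d assume "\<psi> c = \<psi> d"
    moreover have "inj \<phi>" using phi by (rule bij_betw_imp_inj_on)
    ultimately have "to_nat ` enc c = to_nat ` enc d" unfolding \<psi>_def by (rule injD[rotated])
    then have "enc c = enc d" by (simp add: inj_image_eq_iff)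
    then show "c = d" using inj_enc by (simp add: inj_eq)
  qed
  define g where "g x = ev B (inv \<psi> x)" for x
  have "g (\<psi> c) = ev B c" for c using \<open>inj \<psi>\<close> by (simp add: g_def)
  then have "range (ev B) \<subseteq> range g" by (metis image_subsetI rangeI)
  then have "sets borel \<subseteq> range g" using B by (rule order_trans[rotated])
  then show ?thesis by (rule exI[of _ g])
qed



lemma good_order_aux:
  fixes R0 :: "real rel"
  assumes CH and wf: "wf R0" and tr: "trans R0" and tot: "\<forall>x y. x \<noteq> y \<longrightarrow> (x,y)\<in>R0 \<or> (y,x)\<in>R0"
  shows "\<exists>r :: real rel. wf r \<and> trans r \<and> (\<forall>x y. x \<noteq> y \<longrightarrow> (x,y)\<in>r \<or> (y,x)\<in>r) \<and> (\<forall>y. countable {x. (x,y)\<in>r})"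
proof (cases "\<forall>y. countable {x. (x,y)\<in>R0}")
  case True then show ?thesis using wf tr tot by (intro exI[of _ R0]) simp
next
  case False
  then obtain a where "uncountable {x. (x,a)\<in>R0}" by auto
  then obtain a0 where a0: "uncountable {x. (x,a0)\<in>R0}"
    and amin: "\<And>y. (y,a0)\<in>R0 \<Longrightarrow> countable {x. (x,y)\<in>R0}"
  proof -
    have "a \<in> {a. uncountable {x. (x,a)\<in>R0}}" using \<open>uncountable {x. (x,a)\<in>R0}\<close> by simp
    from wfE_min[OF wf this] obtain z where "z \<in> {a. uncountable {x. (x,a)\<in>R0}}"
      "\<And>y. (y, z) \<in> R0 \<Longrightarrow> y \<notin> {a. uncountable {x. (x,a)\<in>R0}}" by metis
    then show ?thesis using that by auto
  qed
  define S where "S = {x. (x,a0)\<in>R0}"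
  have "S \<approx> (UNIV::real set)" using assms(1) a0 unfolding CH_def S_def by blast
  then have "(UNIV::real set) \<approx> S" by (rule eqpoll_sym)
  then obtain h :: "real \<Rightarrow> real" where h: "bij_betw h UNIV S" unfolding eqpoll_def by blast
  then have hinj: "inj h" and hS: "\<And>x. h x \<in> S" by (auto simp: bij_betw_def)
  define r where "r = inv_image R0 h"
  have "wf r" unfolding r_def using wf by (rule wf_inv_image)
  moreover have "trans r" unfolding r_def using tr by (rule trans_inv_image)
  moreover have "\<forall>x y. x \<noteq> y \<longrightarrow> (x,y)\<in>r \<or> (y,x)\<in>r"
  proof (intro allI impI)
    fix x y :: real assume "x \<noteq> y"
    then have "h x \<noteq> h y" using hinj by (auto dest: injD)
    then show "(x,y)\<in>r \<or> (y,x)\<in>r" using tot unfolding r_def inv_image_def by simp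
  qed
  moreover have "countable {x. (x,y)\<in>r}" for y
  proof -
    have c: "countable {c. (c, h y) \<in> R0}" using amin hS[of y] unfolding S_def by blast
    have "h ` {x. (x,y)\<in>r} \<subseteq> {c. (c, h y) \<in> R0}" unfolding r_def by auto
    then have "countable (h ` {x. (x,y)\<in>r})" using c countable_subset by blast
    then show ?thesis using hinj countable_image_inj_on by (metis inj_on_subset subset_UNIV)
  qed
  ultimately show ?thesis by (intro exI[of _ r]) simp
qed

lemma good_order:
  assumes CH
  shows "\<exists>r :: real rel. wf r \<and> trans r \<and> (\<forall>x y. x \<noteq> y \<longrightarrow> (x,y)\<in>r \<or> (y,x)\<in>r) \<and> (\<forall>y. countable {x. (x,y)\<in>r})"
proof -
  from well_ordering obtain W :: "real rel" where W: "Well_order W \<and> Field W = UNIV" ..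
  have "well_order_on UNIV W" using conjunct1[OF W] unfolding conjunct2[OF W] .
  then have lin: "linear_order_on UNIV W" and wf: "wf (W - Id)"
    unfolding well_order_on_def by simp_all
  have trW: "trans W" and asW: "antisym W" and totW: "total_on UNIV W"
    using lin unfolding linear_order_on_def partial_order_on_def preorder_on_def by auto
  have "trans (W - Id)"
  proof (rule transI)
    fix x y z assume xy: "(x,y) \<in> W - Id" and yz: "(y,z) \<in> W - Id"
    then have "(x,z) \<in> W" using trW by (meson DiffD1 transD)
    moreover have "x \<noteq> z"
    proof
      assume "x = z"
      then have "(y,x) \<in> W" using yz by simp
      then have "x = y" using xy asW by (meson DiffD1 antisymD)
      then show False using xy by simp
    qed
    ultimately show "(x,z) \<in> W - Id" by simp
  qed
  moreover have "\<forall>x y. x \<noteq> y \<longrightarrow> (x,y)\<in>W - Id \<or> (y,x)\<in>W - Id"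
    using totW unfolding total_on_def by simp
  ultimately show ?thesis by (rule good_order_aux[OF assms wf])
qed

lemma max_ex:
  assumes tr: "trans r" and tot: "\<forall>x y. x \<noteq> y \<longrightarrow> (x,y)\<in>r \<or> (y,x)\<in>r"
  shows "finite A \<Longrightarrow> A \<noteq> {} \<Longrightarrow> \<exists>m\<in>A. \<forall>a\<in>A. a = m \<or> (a,m)\<in>r"
proof (induction A rule: finite_ne_induct)
  case (singleton x) then show ?case by auto
next
  case (insert x F)
  then obtain m where m: "m \<in> F" "\<forall>a\<in>F. a = m \<or> (a,m)\<in>r" by blast
  show ?case
  proof (cases "x = m \<or> (x,m)\<in>r")
    case True then show ?thesis using m by auto
  next
    case False
    then have "(m,x)\<in>r" using tot by blast
    have "\<forall>a\<in>insert x F. a = x \<or> (a,x)\<in>r"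
    proof
      fix a assume "a \<in> insert x F"
      then have "a = x \<or> a = m \<or> (a,m) \<in> r" using m by auto
      then show "a = x \<or> (a,x)\<in>r" using \<open>(m,x)\<in>r\<close> tr by (meson transD)
    qed
    then show ?thesis by (intro bexI[of _ x]) simp_all
  qed
qed

locale sid =
  fixes \<I> :: "real set set"
  assumes st: "standing_ideal \<I>"
begin

lemma stp: "sigma_ideal \<I>" "(UNIV :: real set) \<notin> \<I>"
  "\<forall>x. \<forall>I\<in>\<I>. (\<lambda>y. x + y) ` I \<in> \<I> \<and> (\<lambda>y. x * y) ` I \<in> \<I>"
  "\<forall>I\<in>\<I>. \<exists>B\<in>\<I>. B \<in> sets borel \<and> I \<subseteq> B"
  "\<forall>A B. A \<in> sets borel \<longrightarrow> B \<in> sets borel \<longrightarrow> A \<notin> \<I> \<longrightarrow> B \<notin> \<I> \<longrightarrow>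
        interior {a - b | a b. a \<in> A \<and> b \<in> B} \<noteq> {}"
  using st[unfolded standing_ideal_def]
  by (rule conjunct1, rule conjunct1[OF conjunct2], rule conjunct1[OF conjunct2[OF conjunct2]],
      rule conjunct1[OF conjunct2[OF conjunct2[OF conjunct2]]],
      rule conjunct2[OF conjunct2[OF conjunct2[OF conjunct2]]])

lemma sgp: "{} \<in> \<I>" "\<forall>A B. A \<in> \<I> \<longrightarrow> B \<subseteq> A \<longrightarrow> B \<in> \<I>"
     "\<forall>f :: nat \<Rightarrow> real set. range f \<subseteq> \<I> \<longrightarrow> \<Union>(range f) \<in> \<I>"
  using stp(1)[unfolded sigma_ideal_def]
  by (rule conjunct1, rule conjunct1[OF conjunct2], rule conjunct2[OF conjunct2])

lemma down: "A \<in> \<I> \<Longrightarrow> B \<subseteq> A \<Longrightarrow> B \<in> \<I>"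
  using sgp(2) by blast

lemma empty_in: "{} \<in> \<I>"
  by (rule sgp(1))

lemma univ_notin: "UNIV \<notin> \<I>"
  by (rule stp(2))

lemma cunion:
  assumes "countable K" "\<And>k. k \<in> K \<Longrightarrow> X k \<in> \<I>"
  shows "(\<Union>k\<in>K. X k) \<in> \<I>"
proof (cases "K = {}")
  case True then show ?thesis using empty_in by simp
next
  case False
  define f where "f n = X (from_nat_into K n)" for n
  have "range f \<subseteq> \<I>"
  proof
    fix y assume "y \<in> range f"
    then obtain n where "y = f n" by auto
    moreover have "from_nat_into K n \<in> K" by (rule from_nat_into[OF False])
    ultimately show "y \<in> \<I>" unfolding f_def using assms(2) by simp
  qed
  then have "\<Union>(range f) \<in> \<I>" using sgp(3) by simp
  moreover have "range f = X ` range (from_nat_into K)" unfolding f_def by (rule image_image[symmetric])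
  moreover have "range (from_nat_into K) = K" by (rule range_from_nat_into[OF False assms(1)])
  ultimately show ?thesis by simp
qed

lemma single: "{x} \<in> \<I>"
proof (rule ccontr)
  assume "{x} \<notin> \<I>"
  moreover have b: "{x} \<in> sets borel" by simp
  ultimately have "interior {a - b | a b. a \<in> {x} \<and> b \<in> {x}} \<noteq> {}"
    using stp(5)[rule_format, OF b b] by blast
  moreover have "{a - b | a b. a \<in> {x} \<and> b \<in> {x}} = {0::real}" by auto
  ultimately show False by simp
qed

lemma countable_in: "countable C \<Longrightarrow> C \<in> \<I>"
  using cunion[of C "\<lambda>x. {x}"] single by simp

lemma affine_in: "A \<in> \<I> \<Longrightarrow> (\<lambda>y. u * (v + y)) ` A \<in> \<I>"
proof -
  assume "A \<in> \<I>"
  then have "(\<lambda>y. v + y) ` A \<in> \<I>" using stp(3) by blast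
  then have "(\<lambda>y. u * y) ` ((\<lambda>y. v + y) ` A) \<in> \<I>" using stp(3) by blast
  then show ?thesis by (simp add: image_image)
qed

lemma hull: "I \<in> \<I> \<Longrightarrow> \<exists>B\<in>\<I>. B \<in> sets borel \<and> I \<subseteq> B"
  using stp(4) by blast

end

lemma rs_mem: "x \<in> A \<Longrightarrow> x \<in> rat_span A"
  unfolding rat_span_def
  by (rule CollectI, rule exI[of _ "{x}"], rule exI[of _ "\<lambda>_. 1"]) simp

lemma rs_sub: "finite F \<Longrightarrow> F \<subseteq> A \<Longrightarrow> (\<Sum>x\<in>F. of_rat (c x) * x) \<in> rat_span A"
  unfolding rat_span_def by blast

lemma rs_mono: "A \<subseteq> B \<Longrightarrow> rat_span A \<subseteq> rat_span B"
  unfolding rat_span_def by blast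

lemma rs_countable:
  assumes "countable A" shows "countable (rat_span A)"
proof -
  define \<sigma> where "\<sigma> xs = sum_list (map (\<lambda>(q,x). of_rat q * x) xs)" for xs :: "(rat \<times> real) list"
  have "rat_span A \<subseteq> \<sigma> ` lists (UNIV \<times> A)"
  proof
    fix y assume "y \<in> rat_span A"
    then obtain F c where y: "y = (\<Sum>x\<in>F. of_rat (c x) * x)" "finite F" "F \<subseteq> A"
      unfolding rat_span_def by blast
    define xs where "xs = map (\<lambda>x. (c x, x)) (sorted_list_of_set F)"
    have "\<sigma> xs = sum_list (map (\<lambda>x. of_rat (c x) * x) (sorted_list_of_set F))"
      unfolding \<sigma>_def xs_def by (simp add: comp_def)
    also have "\<dots> = y" using y by (simp add: sum_list_distinct_conv_sum_set)
    finally have "\<sigma> xs = y" .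
    moreover have "xs \<in> lists (UNIV \<times> A)" using y unfolding xs_def by auto
    ultimately show "y \<in> \<sigma> ` lists (UNIV \<times> A)" by blast
  qed
  moreover have "countable ((UNIV::rat set) \<times> A)" using assms by (intro countable_SIGMA) simp_all
  then have "countable (lists ((UNIV::rat set) \<times> A))" by (rule countable_lists)
  ultimately show ?thesis by (meson countable_image countable_subset)
qed



context sid begin

lemma un2: "A \<in> \<I> \<Longrightarrow> B \<in> \<I> \<Longrightarrow> A \<union> B \<in> \<I>"
proof -
  assume a: "A \<in> \<I>" "B \<in> \<I>"
  have "(\<Union>b\<in>{True,False}. if b then A else B) \<in> \<I>"
    by (rule cunion) (use a in auto)
  moreover have "(\<Union>b\<in>{True,False}. if b then A else B) = A \<union> B" by auto
  ultimately show ?thesis by simp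
qed

lemma main:
  assumes CH
  shows "\<exists>L. ideal_Luzin \<I> L \<and> ideal_Luzin \<I> (rat_span L)"
proof -
  obtain r :: "real rel" where wf: "wf r" and tr: "trans r"
    and tot: "\<forall>x y. x \<noteq> y \<longrightarrow> (x,y)\<in>r \<or> (y,x)\<in>r" and cnt: "\<forall>y. countable {x. (x,y)\<in>r}"
    using good_order[OF assms] by blast
  obtain g0 :: "real \<Rightarrow> real set" where g0: "sets borel \<subseteq> range g0" using borel_surj by blast
  define G where "G x = (if g0 x \<in> \<I> then g0 x else {})" for x
  have GI: "G x \<in> \<I>" for x using empty_in by (simp add: G_def)
  have Gcov: "\<exists>x. I \<subseteq> G x" if II: "I \<in> \<I>" for I
  proof -
    obtain B where B: "B \<in> \<I>" "B \<in> sets borel" "I \<subseteq> B" using hull[OF II] by blast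
    then obtain x where "B = g0 x" using g0 by blast
    then have "G x = B" using B by (simp add: G_def)
    then show ?thesis using B by blast
  qed
  define S where "S h a = rat_span (h ` {b. (b,a)\<in>r})" for h :: "real \<Rightarrow> real" and a
  define Bad where "Bad h a = S h a \<union> {x. \<exists>\<gamma> q s. (\<gamma>,a)\<in>r \<and> q \<noteq> 0 \<and> s \<in> S h a \<and> of_rat q * x + s \<in> G \<gamma>}"
    for h a
  have Bad_in: "Bad h a \<in> \<I>" for h a
  proof -
    have cS: "countable (S h a)" unfolding S_def using cnt by (intro rs_countable countable_image) simp
    define K where "K = {\<gamma>. (\<gamma>,a)\<in>r} \<times> (UNIV - {0::rat}) \<times> S h a"
    define X where "X k = (case k of (\<gamma>,q,s) \<Rightarrow> (\<lambda>y. inverse (of_rat q) * (-s + y)) ` G \<gamma>)" for k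
    have cK: "countable K" unfolding K_def using cnt cS by (intro countable_SIGMA countableI_type) auto
    have sub: "{x. \<exists>\<gamma> q s. (\<gamma>,a)\<in>r \<and> q \<noteq> 0 \<and> s \<in> S h a \<and> of_rat q * x + s \<in> G \<gamma>} \<subseteq> (\<Union>k\<in>K. X k)"
    proof
      fix x assume "x \<in> {x. \<exists>\<gamma> q s. (\<gamma>,a)\<in>r \<and> q \<noteq> 0 \<and> s \<in> S h a \<and> of_rat q * x + s \<in> G \<gamma>}"
      then obtain \<gamma> q s where hq: "(\<gamma>,a)\<in>r" "q \<noteq> 0" "s \<in> S h a" "of_rat q * x + s \<in> G \<gamma>" by blast
      have "x = inverse (of_rat q) * (-s + (of_rat q * x + s))" using hq(2) by (simp add: field_simps)
      then have "x \<in> (\<lambda>y. inverse (of_rat q) * (-s + y)) ` G \<gamma>" using hq(4) by (rule image_eqI)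
      moreover have "(\<gamma>,q,s) \<in> K" using hq unfolding K_def by auto
      ultimately show "x \<in> (\<Union>k\<in>K. X k)" unfolding X_def by (intro UN_I[of "(\<gamma>,q,s)"]) simp_all
    qed
    have "(\<Union>k\<in>K. X k) \<in> \<I>"
    proof (rule cunion[OF cK])
      fix k assume "k \<in> K"
      obtain \<gamma> q s where "k = (\<gamma>,q,s)" by (cases k) auto
      then show "X k \<in> \<I>" unfolding X_def by (simp only: prod.case) (rule affine_in[OF GI])
    qed
    then have "{x. \<exists>\<gamma> q s. (\<gamma>,a)\<in>r \<and> q \<noteq> 0 \<and> s \<in> S h a \<and> of_rat q * x + s \<in> G \<gamma>} \<in> \<I>"
      using sub by (rule down)
    moreover have "S h a \<in> \<I>" using cS by (rule countable_in)
    ultimately show ?thesis unfolding Bad_def by (intro un2)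
  qed
  have ex: "\<exists>x. x \<notin> Bad h a" for h a
  proof (rule ccontr)
    assume "\<not> (\<exists>x. x \<notin> Bad h a)"
    then have "Bad h a = UNIV" by auto
    then show False using Bad_in[of h a] univ_notin by simp
  qed
  define f where "f = wfrec r (\<lambda>h a. SOME x. x \<notin> Bad h a)"
  have BadEq: "Bad (cut f r a) a = Bad f a" for a
  proof -
    have "(cut f r a) ` {b. (b,a)\<in>r} = f ` {b. (b,a)\<in>r}" by (auto simp: cut_apply)
    then show ?thesis unfolding Bad_def S_def by simp
  qed
  have fa: "f a \<notin> Bad f a" for a
  proof -
    have "f a = (SOME x. x \<notin> Bad (cut f r a) a)" unfolding f_def by (subst wfrec[OF wf]) simp
    then have "f a = (SOME x. x \<notin> Bad f a)" using BadEq by simp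
    then show ?thesis using someI_ex[OF ex[of f a]] by simp
  qed
  have lt: "f b \<noteq> f a" if "(b,a)\<in>r" for a b
  proof
    assume "f b = f a"
    then have "f a \<in> f ` {b. (b,a)\<in>r}" using that by (intro image_eqI[of "f a" f b]) simp_all
    then have "f a \<in> S f a" unfolding S_def by (rule rs_mem)
    then have "f a \<in> Bad f a" unfolding Bad_def by simp
    then show False using fa by blast
  qed
  have injf: "inj f"
  proof (rule injI)
    fix x y assume "f x = f y"
    then show "x = y" using lt tot by metis
  qed
  have key: "rat_span (range f) \<inter> G \<gamma> \<subseteq> rat_span (f ` {b. (b,\<gamma>)\<in>r \<or> b = \<gamma>})" for \<gamma>
  proof
    fix y assume y: "y \<in> rat_span (range f) \<inter> G \<gamma>"
    then obtain F c where F: "y = (\<Sum>x\<in>F. of_rat (c x) * x)" "finite F" "F \<subseteq> range f"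
      unfolding rat_span_def by blast
    define F' where "F' = {x\<in>F. c x \<noteq> 0}"
    have fin': "finite F'" using F unfolding F'_def by simp
    have yF': "y = (\<Sum>x\<in>F'. of_rat (c x) * x)" unfolding F(1) F'_def
      by (rule sum.mono_neutral_right) (use F in auto)
    define A where "A = inv f ` F'"
    have finA: "finite A" unfolding A_def using fin' by simp
    have fi: "f (inv f x) = x" if "x \<in> F'" for x
      using that F(3) unfolding F'_def by (auto intro: f_inv_into_f)
    have fA: "f ` A = F'"
    proof
      show "f ` A \<subseteq> F'" unfolding A_def using fi by auto
      show "F' \<subseteq> f ` A" unfolding A_def using fi by (metis image_eqI subsetI)
    qed
    have goal: "\<forall>a\<in>A. (a,\<gamma>)\<in>r \<or> a = \<gamma>"
    proof (rule ccontr)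
      assume "\<not> (\<forall>a\<in>A. (a,\<gamma>)\<in>r \<or> a = \<gamma>)"
      then obtain a1 where a1: "a1 \<in> A" "(a1,\<gamma>)\<notin>r" "a1 \<noteq> \<gamma>" by blast
      then have ga1: "(\<gamma>,a1)\<in>r" using tot by blast
      have "A \<noteq> {}" using a1 by blast
      then obtain m where m: "m \<in> A" "\<forall>a\<in>A. a = m \<or> (a,m)\<in>r" using max_ex[OF tr tot finA] by blast
      have gm: "(\<gamma>,m)\<in>r"
      proof (cases "a1 = m")
        case True then show ?thesis using ga1 by simp
      next
        case False then have "(a1,m)\<in>r" using m a1 by blast
        then show ?thesis using ga1 tr by (meson transD)
      qed
      have fmF: "f m \<in> F'" using m(1) fA by blast
      have cm: "c (f m) \<noteq> 0" using fmF unfolding F'_def by simp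
      define s where "s = (\<Sum>x\<in>F' - {f m}. of_rat (c x) * x)"
      have ys: "y = of_rat (c (f m)) * f m + s" unfolding yF' s_def
        using fin' fmF by (simp add: sum.remove)
      have "F' - {f m} \<subseteq> f ` {b. (b,m)\<in>r}"
      proof
        fix x assume x: "x \<in> F' - {f m}"
        then obtain a where a: "a \<in> A" "x = f a" using fA by auto
        then have "a \<noteq> m" using x by auto
        then have "(a,m)\<in>r" using m(2) a(1) by blast
        then show "x \<in> f ` {b. (b,m)\<in>r}" using a(2) by blast
      qed
      then have sS: "s \<in> S f m" unfolding s_def S_def using fin' by (intro rs_sub) auto
      have "of_rat (c (f m)) * f m + s \<in> G \<gamma>" using ys y by simp
      then have "f m \<in> Bad f m" unfolding Bad_def using gm cm sS by blast
      then show False using fa by blast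
    qed
    then have "F' \<subseteq> f ` {b. (b,\<gamma>)\<in>r \<or> b = \<gamma>}" using fA by blast
    then show "y \<in> rat_span (f ` {b. (b,\<gamma>)\<in>r \<or> b = \<gamma>})" unfolding yF' using fin' by (rule rs_sub[rotated])
  qed
  define L where "L = range f"
  have Lunc: "uncountable L"
  proof
    assume "countable L"
    then have "countable (UNIV::real set)" unfolding L_def using injf
      by (metis countable_image_inj_on)
    then show False using uncountable_UNIV_real by simp
  qed
  have LS: "L \<subseteq> rat_span L" using rs_mem by blast
  have cntI: "countable (rat_span L \<inter> I)" if II: "I \<in> \<I>" for I
  proof -
    obtain x where "I \<subseteq> G x" using Gcov[OF II] by blast
    then have "rat_span L \<inter> I \<subseteq> rat_span (f ` {b. (b,x)\<in>r \<or> b = x})" using key[of x] unfolding L_def by blast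
    moreover have "{b. (b,x)\<in>r \<or> b = x} = insert x {b. (b,x)\<in>r}" by auto
    then have "countable {b. (b,x)\<in>r \<or> b = x}" using cnt by simp
    then have "countable (rat_span (f ` {b. (b,x)\<in>r \<or> b = x}))" by (intro rs_countable countable_image)
    ultimately show ?thesis by (rule countable_subset)
  qed
  have "L \<approx> (UNIV::real set)" using assms Lunc unfolding CH_def by blast
  moreover have "uncountable (rat_span L)" using Lunc LS countable_subset by blast
  then have "rat_span L \<approx> (UNIV::real set)" using assms unfolding CH_def by blast
  moreover have "countable (L \<inter> I)" if "I \<in> \<I>" for I
    using cntI[OF that] LS by (meson Int_mono countable_subset order_refl)
  ultimately show ?thesis unfolding ideal_Luzin_def using cntI by blast
qed

end

theorem mainTheorem16:
  assumes "CH"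
    and "standing_ideal \<I>"
  shows "\<exists>L :: real set. ideal_Luzin \<I> L \<and> ideal_Luzin \<I> (rat_span L)"
proof -
  interpret sid \<I> using assms(2) by unfold_locales
  show ?thesis using main[OF assms(1)] .
qed

end
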